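(* Let $S = R\cup B$ be a finite set of points in the plane in general position (no three collinear), colored red ($R$) and blue ($B$), such that $R$ and $B$ are not linearly separable, $CH(B)\subset CH(R)$, $|R| = 3$ and $|B|\ge 2$. Then $S$ contains a balanced convex $4$-hole if and only if there is an edge $\overline{uv}$ of $CH(B)$ (with $u,v\in B$) such that one of the two open half-planes bounded by the line through $u$ and $v$ contains exactly two red points and no blue point.
   Context: A $4$-hole of $S$ is a simple quadrilateral with vertices in $S$ and no point of $S$ in its interior; it is convex if the quadrilateral is convex, and balanced if it has exactly two red and two blue vertices. $CH(X)$ denotes the convex hull of $X$. $R$ and $B$ are linearly separable if some line has all of $R$ strictly on one side and all of $B$ strictly on the other. *)

theory Defs
  imports "HOL-Analysis.Analysis"
begin

type_synonym point = "real \<times> real"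

definition general_position :: "point set \<Rightarrow> bool" where
  "general_position S \<longleftrightarrow>
     (\<forall>a\<in>S. \<forall>b\<in>S. \<forall>c\<in>S. a \<noteq> b \<and> a \<noteq> c \<and> b \<noteq> c \<longrightarrow> \<not> collinear {a, b, c})"

definition linearly_separable :: "point set \<Rightarrow> point set \<Rightarrow> bool" where
  "linearly_separable R B \<longleftrightarrow>
     (\<exists>w c. w \<noteq> 0 \<and> (\<forall>r\<in>R. inner w r < c) \<and> (\<forall>b\<in>B. inner w b > c))"

definition convex_position :: "point set \<Rightarrow> bool" where
  "convex_position Q \<longleftrightarrow> (\<forall>p\<in>Q. p \<notin> convex hull (Q - {p}))"

definition convex_4hole :: "point set \<Rightarrow> point set \<Rightarrow> bool" where
  "convex_4hole S Q \<longleftrightarrow> Q \<subseteq> S \<and> card Q = 4 \<and> convex_position Q \<and>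
     S \<inter> interior (convex hull Q) = {}"

definition balanced_convex_4hole :: "point set \<Rightarrow> point set \<Rightarrow> point set \<Rightarrow> bool" where
  "balanced_convex_4hole R B Q \<longleftrightarrow> convex_4hole (R \<union> B) Q \<and>
     card (Q \<inter> R) = 2 \<and> card (Q \<inter> B) = 2"

definition orient :: "point \<Rightarrow> point \<Rightarrow> point \<Rightarrow> real" where
  "orient u v p = (fst v - fst u) * (snd p - snd u) - (snd v - snd u) * (fst p - fst u)"

definition open_halfplanes :: "point \<Rightarrow> point \<Rightarrow> point set set" where
  "open_halfplanes u v = {{p. orient u v p > 0}, {p. orient u v p < 0}}"

definition hull_edge :: "point set \<Rightarrow> point \<Rightarrow> point \<Rightarrow> bool" where
  "hull_edge B u v \<longleftrightarrow> u \<in> B \<and> v \<in> B \<and> u \<noteq> v \<and> closed_segment u v face_of convex hull B"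

end

theory Submission
  imports Defs "HOL-Analysis.Analysis"
begin


lemma orient_cyc: "orient a b c = orient b c a"
  by (simp add: orient_def algebra_simps)
lemma orient_swap: "orient a b c = - orient b a c"
  by (simp add: orient_def algebra_simps)
lemma orient_self[simp]: "orient a b a = 0" "orient a b b = 0" "orient a a b = 0"
  by (simp_all add: orient_def)

lemma orient_comb3:
  assumes "u + v + w = 1"
  shows "orient a b (u *\<^sub>R x + v *\<^sub>R y + w *\<^sub>R z) = u * orient a b x + v * orient a b y + w * orient a b z"
proof -
  have w: "w = 1 - u - v" using assms by simp
  show ?thesis unfolding w by (simp add: orient_def algebra_simps)
qed

lemma orient_comb2:
  assumes "u + v = 1"
  shows "orient a b (u *\<^sub>R x + v *\<^sub>R y) = u * orient a b x + v * orient a b y"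
proof -
  have w: "v = 1 - u" using assms by simp
  show ?thesis unfolding w by (simp add: orient_def algebra_simps)
qed

lemma orient_inner: "orient a b p = inner (snd a - snd b, fst b - fst a) p + orient a b 0"
  by (cases p) (simp add: orient_def algebra_simps)

lemma pluecker: "orient p x z * orient p e y = orient p x y * orient p e z + orient p y z * orient p e x"
  unfolding orient_def by algebra

lemma orient_refl: "orient p (2 *\<^sub>R p - q) z = - orient p q z"
  by (simp add: orient_def algebra_simps)

lemma orient0_collinear:
  assumes "orient a b c = 0" shows "collinear {a,b,c}"
proof (cases "a = c")
  case True then show ?thesis by (simp add: insert_commute)
next
  case False
  obtain ax ay bx by' cx cy where P: "a = (ax,ay)" "b = (bx,by')" "c = (cx,cy)"
    by (metis surj_pair)
  have o: "(bx - ax) * (cy - ay) = (by' - ay) * (cx - ax)"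
    using assms by (simp add: P orient_def)
  obtain t where t: "b = a + t *\<^sub>R (c - a)"
  proof (cases "cx = ax")
    case True
    then have "cy \<noteq> ay" using False P by auto
    moreover have "bx = ax" using o True \<open>cy \<noteq> ay\<close> by simp
    ultimately show ?thesis using True
      by (intro that[of "(by' - ay)/(cy - ay)"]) (simp add: P field_simps)
  next
    case F: False
    have "by' = ay + (bx - ax) / (cx - ax) * (cy - ay)"
      using o F by (simp add: field_simps)
    then show ?thesis using F
      by (intro that[of "(bx - ax)/(cx - ax)"]) (simp add: P field_simps)
  qed
  show ?thesis unfolding collinear_alt
    apply (rule exI[of _ a], rule exI[of _ "c - a"])
    using t by (auto intro: exI[of _ 0] exI[of _ 1] exI[of _ t])
qed

lemma in_tri:
  assumes "orient a b p * k \<ge> 0" "orient b c p * k \<ge> 0" "orient c a p * k \<ge> 0"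
    "orient a b c * k > 0"
  shows "p \<in> convex hull {a,b,c}"
proof -
  define D where "D = orient a b c"
  have D: "D \<noteq> 0" using assms(4) D_def by auto
  have s0: "orient b c p + orient c a p + orient a b p = D"
    unfolding D_def orient_def by algebra
  have s: "orient b c p / D + orient c a p / D + orient a b p / D = 1"
    using D s0 by (simp add: add_divide_distrib[symmetric])
  have e0: "D *\<^sub>R p = orient b c p *\<^sub>R a + orient c a p *\<^sub>R b + orient a b p *\<^sub>R c"
    unfolding D_def prod_eq_iff by (simp add: orient_def; algebra)
  have e: "p = (orient b c p / D) *\<^sub>R a + (orient c a p / D) *\<^sub>R b + (orient a b p / D) *\<^sub>R c"
  proof -
    have "p = (1/D) *\<^sub>R (D *\<^sub>R p)" using D by simp
    also have "\<dots> = (orient b c p / D) *\<^sub>R a + (orient c a p / D) *\<^sub>R b + (orient a b p / D) *\<^sub>R c"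
      unfolding e0 by (simp add: scaleR_add_right)
    finally show ?thesis .
  qed
  have nn: "x * k \<ge> 0 \<Longrightarrow> 0 \<le> x / D" for x
  proof -
    assume x: "x * k \<ge> 0"
    have Dk: "D * k > 0" using assms(4) unfolding D_def .
    then have "k \<noteq> 0" by auto
    then have eq: "x / D = (x*k)/(D*k)" by simp
    show ?thesis unfolding eq by (rule divide_nonneg_pos[OF x Dk])
  qed
  show ?thesis unfolding convex_hull_3
    using e s nn assms(1-3) by blast
qed

lemma hull3_obtain:
  assumes "p \<in> convex hull {a,b,c}"
  obtains x y z where "0 \<le> x" "0 \<le> y" "0 \<le> z" "x + y + z = 1" "p = x *\<^sub>R a + y *\<^sub>R b + z *\<^sub>R c"
  using assms unfolding convex_hull_3 by blast

lemma inside: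
  assumes "p \<in> convex hull {a,b,c}" "orient a b p \<noteq> 0"
  shows "orient a b p * orient a b c > 0"
proof -
  obtain x y z where xyz: "0 \<le> x" "0 \<le> y" "0 \<le> z" "x + y + z = 1" "p = x *\<^sub>R a + y *\<^sub>R b + z *\<^sub>R c"
    using hull3_obtain[OF assms(1)] by blast
  have e: "orient a b p = z * orient a b c" using xyz by (simp add: orient_comb3)
  then have "z \<noteq> 0" "orient a b c \<noteq> 0" using assms(2) by auto
  then have "z > 0" using xyz by auto
  moreover have "orient a b c * orient a b c > 0" using \<open>orient a b c \<noteq> 0\<close> by (metis not_real_square_gt_zero)
  ultimately have "z * (orient a b c * orient a b c) > 0" by simp
  then show ?thesis unfolding e by (simp add: mult.assoc)
qed

lemma vertex:
  assumes "p \<in> convex hull {a,b,c}" "p \<noteq> a" "orient b c a \<noteq> 0"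
  shows "orient b c p * orient b c a < orient b c a * orient b c a"
proof -
  obtain x y z where xyz: "0 \<le> x" "0 \<le> y" "0 \<le> z" "x + y + z = 1" "p = x *\<^sub>R a + y *\<^sub>R b + z *\<^sub>R c"
    using hull3_obtain[OF assms(1)] by blast
  have e: "orient b c p = x * orient b c a"
    using xyz by (simp add: orient_comb3 orient_cyc[of b c b] orient_cyc[of b c c])
  have "x \<noteq> 1"
  proof
    assume "x = 1" then have "y = 0" "z = 0" using xyz by linarith+
    then show False using xyz(5) \<open>x = 1\<close> assms(2) by simp
  qed
  then have "x < 1" using xyz by auto
  moreover have "orient b c a * orient b c a > 0" using assms(3) by (metis not_real_square_gt_zero)
  ultimately have "x * (orient b c a * orient b c a) < 1 * (orient b c a * orient b c a)"
    by (intro mult_strict_right_mono)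
  then show ?thesis unfolding e by (simp add: mult.assoc)
qed

lemma hull3_pos:
  assumes "p \<in> convex hull {a,b,c}" "f a > 0" "f b > 0" "f c > 0"
    and f: "f = (\<lambda>q. orient s t q * k)"
  shows "f p > 0"
proof -
  obtain x y z where xyz: "0 \<le> x" "0 \<le> y" "0 \<le> z" "x + y + z = 1" "p = x *\<^sub>R a + y *\<^sub>R b + z *\<^sub>R c"
    using hull3_obtain[OF assms(1)] by blast
  have "orient s t p = x * orient s t a + y * orient s t b + z * orient s t c"
    by (simp add: xyz(5) orient_comb3[OF xyz(4)])
  then have e: "f p = x * f a + y * f b + z * f c"
    by (simp add: f algebra_simps)
  have "x * f a \<ge> 0" "y * f b \<ge> 0" "z * f c \<ge> 0" using xyz assms by auto
  moreover have "x > 0 \<or> y > 0 \<or> z > 0" using xyz by auto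
  moreover have "x > 0 \<Longrightarrow> x * f a > 0" "y > 0 \<Longrightarrow> y * f b > 0" "z > 0 \<Longrightarrow> z * f c > 0"
    using assms(2-4) by auto
  ultimately show ?thesis unfolding e by linarith
qed

lemma convex_hp_le: "convex {p. orient a b p * k \<le> c}"
proof (rule convexI)
  fix x y :: point and u v :: real
  assume *: "x \<in> {p. orient a b p * k \<le> c}" "y \<in> {p. orient a b p * k \<le> c}" "0 \<le> u" "0 \<le> v" "u + v = 1"
  have "orient a b (u *\<^sub>R x + v *\<^sub>R y) * k = u * (orient a b x * k) + v * (orient a b y * k)"
    using * by (simp add: orient_comb2 algebra_simps)
  also have "\<dots> \<le> u * c + v * c" using * by (intro add_mono mult_left_mono) auto
  also have "\<dots> = c" using * by (metis distrib_right mult_1_left)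
  finally show "u *\<^sub>R x + v *\<^sub>R y \<in> {p. orient a b p * k \<le> c}" by simp
qed

lemma convex_hp_less: "convex {p. orient a b p * k < c}"
proof (rule convexI)
  fix x y :: point and u v :: real
  assume *: "x \<in> {p. orient a b p * k < c}" "y \<in> {p. orient a b p * k < c}" "0 \<le> u" "0 \<le> v" "u + v = 1"
  have "orient a b (u *\<^sub>R x + v *\<^sub>R y) * k = u * (orient a b x * k) + v * (orient a b y * k)"
    using * by (simp add: orient_comb2 algebra_simps)
  also have "\<dots> < u * c + v * c"
  proof (cases "u = 0")
    case True then show ?thesis using * by auto
  next
    case False then have "u > 0" using * by auto
    then show ?thesis using * by (intro add_less_le_mono mult_strict_left_mono mult_left_mono) auto
  qed
  also have "\<dots> = c" using * by (metis distrib_right mult_1_left)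
  finally show "u *\<^sub>R x + v *\<^sub>R y \<in> {p. orient a b p * k < c}" by simp
qed

lemma hull_hp_le: "S \<subseteq> {p. orient a b p * k \<le> c} \<Longrightarrow> convex hull S \<subseteq> {p. orient a b p * k \<le> c}"
  by (metis hull_minimal convex_hp_le)
lemma hull_hp_less: "S \<subseteq> {p. orient a b p * k < c} \<Longrightarrow> convex hull S \<subseteq> {p. orient a b p * k < c}"
  by (metis hull_minimal convex_hp_less)

lemma interior_hp:
  assumes "a \<noteq> b" "k \<noteq> 0" "S \<subseteq> {p. orient a b p * k \<le> c}"
  shows "interior S \<subseteq> {p. orient a b p * k < c}"
proof -
  define w where "w = k *\<^sub>R (snd a - snd b, fst b - fst a)"
  have eq: "orient a b p * k = inner w p + orient a b 0 * k" for p
    unfolding w_def by (cases p) (simp add: orient_def algebra_simps)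
  have "w \<noteq> 0" using assms(1,2) unfolding w_def by (auto simp: prod_eq_iff)
  have "S \<subseteq> {p. inner w p \<le> c - orient a b 0 * k}" using assms(3) eq by (force simp: algebra_simps)
  then have "interior S \<subseteq> interior {p. inner w p \<le> c - orient a b 0 * k}" by (rule interior_mono)
  also have "\<dots> = {p. inner w p < c - orient a b 0 * k}" using \<open>w \<noteq> 0\<close> by simp
  also have "\<dots> = {p. orient a b p * k < c}" using eq by (force simp: algebra_simps)
  finally show ?thesis .
qed

lemma dir_back:
  assumes R: "R = {r1,r2,r3}" "r1 \<noteq> r2" "r1 \<noteq> r3" "r2 \<noteq> r3"
    and disj: "R \<inter> B = {}"
    and gp: "\<And>x y z. x \<in> R \<union> B \<Longrightarrow> y \<in> R \<union> B \<Longrightarrow> z \<in> R \<union> B \<Longrightarrow> x \<noteq> y \<Longrightarrow> x \<noteq> z \<Longrightarrow> y \<noteq> z \<Longrightarrow> orient x y z \<noteq> 0"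
    and BR: "B \<subseteq> convex hull R"
    and uv: "u \<in> B" "v \<in> B" "u \<noteq> v" and k: "k \<noteq> 0"
    and h1: "orient u v r1 * k > 0" "orient u v r2 * k > 0"
    and hB: "\<forall>b\<in>B. orient u v b * k \<le> 0"
  shows "balanced_convex_4hole R B {r1,r2,u,v}"
proof -
  have rB: "r1 \<notin> B" "r2 \<notin> B" "r3 \<notin> B" using disj R by auto
  have uR: "u \<noteq> r1" "u \<noteq> r2" "u \<noteq> r3" "v \<noteq> r1" "v \<noteq> r2" "v \<noteq> r3" using rB uv by auto
  have hull3: "x \<in> convex hull {r1,r2,r3}" if "x \<in> B" for x using BR R that by auto
  have hull3': "x \<in> convex hull {r2,r1,r3}" if "x \<in> B" for x using hull3[OF that] by (simp add: insert_commute)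
  have o3: "orient u v r3 * k < 0"
  proof (rule ccontr)
    assume "\<not> ?thesis"
    moreover have "orient u v r3 \<noteq> 0" using gp[of u v r3] uv uR R by auto
    ultimately have "orient u v r3 * k > 0" using k by (simp add: not_less order.order_iff_strict)
    then have "orient u v u * k > 0"
      by (intro hull3_pos[where f = "\<lambda>q. orient u v q * k", OF hull3[OF uv(1)]]) (use h1 in auto)
    then show False by simp
  qed
  define D1 where "D1 = orient r2 r3 r1"
  define D2 where "D2 = orient r1 r3 r2"
  have D1: "D1 \<noteq> 0" unfolding D1_def using gp[of r2 r3 r1] R by auto
  have D2: "D2 \<noteq> 0" unfolding D2_def using gp[of r1 r3 r2] R by auto
  have f1: "orient r2 r3 x * D1 < D1 * D1" if "x \<in> B" for x
    unfolding D1_def by (rule vertex[OF hull3[OF that]]) (use that rB D1 D1_def in auto)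
  have f2: "orient r1 r3 x * D2 < D2 * D2" if "x \<in> B" for x
    unfolding D2_def by (rule vertex[OF hull3'[OF that]]) (use that rB D2 D2_def in auto)
  have DD1: "D1 * D1 > 0" "D2 * D2 > 0" using D1 D2 by (metis not_real_square_gt_zero)+
  define Q where "Q = {r1,r2,u,v}"
  have cp: "convex_position Q"
    unfolding convex_position_def
  proof
    fix p assume "p \<in> Q"
    then consider "p = r1" | "p = r2" | "p = u" | "p = v" unfolding Q_def by auto
    then show "p \<notin> convex hull (Q - {p})"
    proof cases
      case 1
      have "Q - {p} = {r2,u,v}" unfolding Q_def 1 using R uR by auto
      moreover have "convex hull {r2,u,v} \<subseteq> {q. orient r2 r3 q * D1 < D1 * D1}"
        by (rule hull_hp_less) (use f1 uv DD1 in auto)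
      moreover have "\<not> orient r2 r3 r1 * D1 < D1 * D1" unfolding D1_def by simp
      ultimately show ?thesis using 1 by auto
    next
      case 2
      have "Q - {p} = {r1,u,v}" unfolding Q_def 2 using R uR by auto
      moreover have "convex hull {r1,u,v} \<subseteq> {q. orient r1 r3 q * D2 < D2 * D2}"
        by (rule hull_hp_less) (use f2 uv DD1 in auto)
      moreover have "\<not> orient r1 r3 r2 * D2 < D2 * D2" unfolding D2_def by simp
      ultimately show ?thesis using 2 by auto
    next
      case 3
      have "Q - {p} = {r1,r2,v}" unfolding Q_def 3 using R uR uv by auto
      moreover have "u \<notin> convex hull {r1,r2,v}"
      proof
        assume "u \<in> convex hull {r1,r2,v}"
        then obtain x y z where xyz: "0 \<le> x" "0 \<le> y" "0 \<le> z" "x + y + z = 1"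
          "u = x *\<^sub>R r1 + y *\<^sub>R r2 + z *\<^sub>R v" by (rule hull3_obtain)
        have "orient u v (x *\<^sub>R r1 + y *\<^sub>R r2 + z *\<^sub>R v) = x * orient u v r1 + y * orient u v r2 + z * orient u v v"
          by (rule orient_comb3[OF xyz(4)])
        then have "orient u v u = x * orient u v r1 + y * orient u v r2 + z * orient u v v"
          by (simp only: xyz(5)[symmetric])
        then have "x * orient u v r1 + y * orient u v r2 = 0" by simp
        then have "(x * orient u v r1 + y * orient u v r2) * k = 0" by simp
        then have "0 = x * (orient u v r1 * k) + y * (orient u v r2 * k)" by (simp add: algebra_simps)
        moreover have "x * (orient u v r1 * k) \<ge> 0" "y * (orient u v r2 * k) \<ge> 0" using xyz h1 by auto
        ultimately have "x * (orient u v r1 * k) = 0" "y * (orient u v r2 * k) = 0" by linarith+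
        then have "x = 0" "y = 0" using h1 by auto
        then have "z = 1" using xyz by simp
        then show False using xyz \<open>x = 0\<close> \<open>y = 0\<close> uv by simp
      qed
      ultimately show ?thesis using 3 by auto
    next
      case 4
      have "Q - {p} = {r1,r2,u}" unfolding Q_def 4 using R uR uv by auto
      moreover have "v \<notin> convex hull {r1,r2,u}"
      proof
        assume "v \<in> convex hull {r1,r2,u}"
        then obtain x y z where xyz: "0 \<le> x" "0 \<le> y" "0 \<le> z" "x + y + z = 1"
          "v = x *\<^sub>R r1 + y *\<^sub>R r2 + z *\<^sub>R u" by (rule hull3_obtain)
        have "orient u v (x *\<^sub>R r1 + y *\<^sub>R r2 + z *\<^sub>R u) = x * orient u v r1 + y * orient u v r2 + z * orient u v u"
          by (rule orient_comb3[OF xyz(4)])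
        then have "orient u v v = x * orient u v r1 + y * orient u v r2 + z * orient u v u"
          by (simp only: xyz(5)[symmetric])
        then have "x * orient u v r1 + y * orient u v r2 = 0" by simp
        then have "(x * orient u v r1 + y * orient u v r2) * k = 0" by simp
        then have "0 = x * (orient u v r1 * k) + y * (orient u v r2 * k)" by (simp add: algebra_simps)
        moreover have "x * (orient u v r1 * k) \<ge> 0" "y * (orient u v r2 * k) \<ge> 0" using xyz h1 by auto
        ultimately have "x * (orient u v r1 * k) = 0" "y * (orient u v r2 * k) = 0" by linarith+
        then have "x = 0" "y = 0" using h1 by auto
        then have "z = 1" using xyz by simp
        then show False using xyz \<open>x = 0\<close> \<open>y = 0\<close> uv by simp
      qed
      ultimately show ?thesis using 4 by auto
    qed
  qed
  have i1: "interior (convex hull Q) \<subseteq> {q. orient u v q * (-k) < 0}"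
    by (rule interior_hp) (use uv k in simp, use k in simp, rule hull_hp_le, use h1 in \<open>auto simp: Q_def\<close>)
  have i2: "interior (convex hull Q) \<subseteq> {q. orient r2 r3 q * D1 < D1 * D1}"
  proof (rule interior_hp)
    have "orient r2 r3 u * D1 \<le> D1 * D1" "orient r2 r3 v * D1 \<le> D1 * D1"
      using f1[OF uv(1)] f1[OF uv(2)] by simp_all
    then have "Q \<subseteq> {q. orient r2 r3 q * D1 \<le> D1 * D1}" using DD1 unfolding Q_def by (auto simp: D1_def)
    then show "convex hull Q \<subseteq> {q. orient r2 r3 q * D1 \<le> D1 * D1}" by (rule hull_hp_le)
  qed (use R D1 in auto)
  have i3: "interior (convex hull Q) \<subseteq> {q. orient r1 r3 q * D2 < D2 * D2}"
  proof (rule interior_hp)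
    have "orient r1 r3 u * D2 \<le> D2 * D2" "orient r1 r3 v * D2 \<le> D2 * D2"
      using f2[OF uv(1)] f2[OF uv(2)] by simp_all
    then have "Q \<subseteq> {q. orient r1 r3 q * D2 \<le> D2 * D2}" using DD1 unfolding Q_def by (auto simp: D2_def)
    then show "convex hull Q \<subseteq> {q. orient r1 r3 q * D2 \<le> D2 * D2}" by (rule hull_hp_le)
  qed (use R D2 in auto)
  have emp: "(R \<union> B) \<inter> interior (convex hull Q) = {}"
  proof (rule ccontr)
    assume "\<not> ?thesis"
    then obtain p where p: "p \<in> R \<union> B" "p \<in> interior (convex hull Q)" by blast
    have a: "orient u v p * k > 0" using i1 p(2) by auto
    have b: "orient r2 r3 p * D1 < D1 * D1" using i2 p(2) by auto
    have c: "orient r1 r3 p * D2 < D2 * D2" using i3 p(2) by auto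
    show False using p(1) R hB a b c o3 by (auto simp: D1_def D2_def)
  qed
  have QR: "Q \<inter> R = {r1,r2}" unfolding Q_def using R uR by auto
  have QB: "Q \<inter> B = {u,v}" unfolding Q_def using rB uv by auto
  have cQ: "card Q = 4" unfolding Q_def using R uR uv by auto
  show ?thesis
    unfolding balanced_convex_4hole_def convex_4hole_def Q_def[symmetric]
    using cp emp QR QB cQ R uv R uR by (auto simp: Q_def)
qed



lemma orient_swap23: "orient a c b = - orient a b c"
  by (simp add: orient_def algebra_simps)

lemma otrans:
  assumes "orient p e x * k > 0" "orient p e y * k > 0" "orient p e z * k > 0"
    "orient p x y * k > 0" "orient p y z * k > 0"
  shows "orient p x z * k > 0"
proof -
  have "(orient p x z * k) * (orient p e y * k) = (orient p x y * k) * (orient p e z * k) + (orient p y z * k) * (orient p e x * k)"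
    using pluecker[of p x z e y] by (simp add: algebra_simps)
  also have "\<dots> > 0" using mult_pos_pos[OF assms(4) assms(3)] mult_pos_pos[OF assms(5) assms(1)] by linarith
  finally show ?thesis using assms(2) by (rule zero_less_mult_pos2)
qed

lemma extreme:
  assumes "finite A" "A \<noteq> {}" "\<forall>x\<in>A. orient p e x * k > 0"
    "\<forall>x\<in>A. \<forall>y\<in>A. x \<noteq> y \<longrightarrow> orient p x y \<noteq> 0"
  shows "\<exists>m\<in>A. \<forall>y\<in>A. y \<noteq> m \<longrightarrow> orient p m y * k > 0"
  using assms
proof (induction A rule: finite_ne_induct)
  case (singleton x) then show ?case by auto
next
  case (insert x F)
  then obtain m where m: "m \<in> F" "\<forall>y\<in>F. y \<noteq> m \<longrightarrow> orient p m y * k > 0" by auto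
  have xm: "x \<noteq> m" using m insert by auto
  have nz: "orient p x m * k \<noteq> 0"
  proof -
    have "orient p x m \<noteq> 0" using insert.prems(2) m xm by auto
    moreover have "k \<noteq> 0" using insert.prems(1) by auto
    ultimately show ?thesis by simp
  qed
  show ?case
  proof (cases "orient p x m * k > 0")
    case True
    have "orient p x y * k > 0" if "y \<in> insert x F" "y \<noteq> x" for y
    proof (cases "y = m")
      case True then show ?thesis using \<open>orient p x m * k > 0\<close> by simp
    next
      case False
      have h: "orient p m y * k > 0" using m that False by auto
      have P: "\<And>q. q \<in> insert x F \<Longrightarrow> orient p e q * k > 0" using insert.prems(1) by blast
      have mem: "x \<in> insert x F" "m \<in> insert x F" "y \<in> insert x F" using m that by auto
      show ?thesis
        by (rule otrans[OF P[OF mem(1)] P[OF mem(2)] P[OF mem(3)] True h])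
    qed
    then show ?thesis by blast
  next
    case False
    have sw: "orient p m x * k = - (orient p x m * k)" using orient_swap23[of p m x] by simp
    have "orient p m x * k > 0" using False nz unfolding sw by linarith
    then show ?thesis using m by auto
  qed
qed

lemma open_hp: "open {p. orient a b p * k > 0}"
  unfolding orient_def by (intro open_Collect_less continuous_intros)

lemma orient_affine_sum:
  assumes "finite A" "sum u A = 1"
  shows "orient a b (\<Sum>x\<in>A. u x *\<^sub>R x) = (\<Sum>x\<in>A. u x * orient a b x)"
proof -
  define w where "w = (snd a - snd b, fst b - fst a)"
  have "orient a b (\<Sum>x\<in>A. u x *\<^sub>R x) = inner w (\<Sum>x\<in>A. u x *\<^sub>R x) + orient a b 0"
    unfolding w_def by (rule orient_inner)
  also have "\<dots> = (\<Sum>x\<in>A. u x * inner w x) + (\<Sum>x\<in>A. u x) * orient a b 0"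
    using assms by (simp add: inner_sum_right)
  also have "\<dots> = (\<Sum>x\<in>A. u x * (inner w x + orient a b 0))"
    by (simp add: sum_distrib_right distrib_left sum.distrib)
  also have "\<dots> = (\<Sum>x\<in>A. u x * orient a b x)"
    unfolding w_def using orient_inner by metis
  finally show ?thesis .
qed

lemma face_lemma:
  assumes "finite B" "a \<in> B" "b \<in> B" "a \<noteq> b" "k \<noteq> 0"
    and pos: "\<forall>z\<in>B - {a,b}. orient a b z * k > 0"
  shows "closed_segment a b face_of convex hull B"
proof -
  define w where "w = k *\<^sub>R (snd a - snd b, fst b - fst a)"
  define c0 where "c0 = orient a b 0 * k"
  have eq: "orient a b p * k = inner w p + c0" for p
    unfolding w_def c0_def by (cases p) (simp add: orient_def algebra_simps)
  have Bge: "B \<subseteq> {p. orient a b p * (-k) \<le> 0}"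
  proof
    fix z assume "z \<in> B"
    have "orient a b z * k \<ge> 0"
    proof (cases "z = a \<or> z = b")
      case True then show ?thesis by auto
    next
      case False then have "z \<in> B - {a,b}" using \<open>z \<in> B\<close> by simp
      then show ?thesis using pos by (meson less_imp_le)
    qed
    then show "z \<in> {p. orient a b p * (-k) \<le> 0}" by simp
  qed
  have hge: "convex hull B \<subseteq> {p. orient a b p * (-k) \<le> 0}" by (rule hull_hp_le[OF Bge])
  have face: "(convex hull B \<inter> {x. inner w x = - c0}) face_of convex hull B"
  proof (rule face_of_Int_supporting_hyperplane_ge)
    show "convex (convex hull B)" by simp
    fix x assume "x \<in> convex hull B"
    then have "orient a b x * (-k) \<le> 0" using hge by auto
    then show "inner w x \<ge> - c0" using eq[of x] by simp
  qed
  have seteq: "convex hull B \<inter> {x. inner w x = - c0} = closed_segment a b"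
  proof
    show "closed_segment a b \<subseteq> convex hull B \<inter> {x. inner w x = - c0}"
    proof
      fix y assume y: "y \<in> closed_segment a b"
      have "{a,b} \<subseteq> B" using assms(2,3) by simp
      then have "convex hull {a,b} \<subseteq> convex hull B" by (rule hull_mono)
      then have "y \<in> convex hull B" using y unfolding segment_convex_hull by blast
      moreover obtain t where t: "y = (1 - t) *\<^sub>R a + t *\<^sub>R b" using y unfolding closed_segment_def by auto
      have "orient a b y = 0" unfolding t by (subst orient_comb2) auto
      then have "inner w y = - c0" using eq[of y] by simp
      ultimately show "y \<in> convex hull B \<inter> {x. inner w x = - c0}" by simp
    qed
  next
    show "convex hull B \<inter> {x. inner w x = - c0} \<subseteq> closed_segment a b"
    proof
      fix y assume y: "y \<in> convex hull B \<inter> {x. inner w x = - c0}"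
      then have "y \<in> convex hull B" by simp
      then have "\<exists>u. (\<forall>x\<in>B. 0 \<le> u x) \<and> sum u B = 1 \<and> (\<Sum>x\<in>B. u x *\<^sub>R x) = y"
        by (simp add: convex_hull_finite[OF assms(1)])
      then obtain u where u: "\<forall>x\<in>B. 0 \<le> u x" "sum u B = 1" "(\<Sum>x\<in>B. u x *\<^sub>R x) = y"
        by blast
      have o0: "orient a b y * k = 0" using y eq[of y] by simp
      have "orient a b y = (\<Sum>x\<in>B. u x * orient a b x)"
        using orient_affine_sum[OF assms(1) u(2), of a b] u(3) by simp
      then have "orient a b y * k = (\<Sum>x\<in>B. u x * orient a b x * k)" by (simp add: sum_distrib_right)
      then have "orient a b y * k = (\<Sum>x\<in>B. u x * (orient a b x * k))" by (simp add: mult.assoc)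
      then have s0: "(\<Sum>x\<in>B. u x * (orient a b x * k)) = 0" using o0 by simp
      have nn: "\<forall>x\<in>B. u x * (orient a b x * k) \<ge> 0"
      proof
        fix x assume "x \<in> B"
        then have "orient a b x * k \<ge> 0" using Bge by auto
        then show "u x * (orient a b x * k) \<ge> 0" using u(1) \<open>x \<in> B\<close> by simp
      qed
      have z: "u x = 0" if "x \<in> B - {a,b}" for x
      proof -
        have "\<forall>x\<in>B. u x * (orient a b x * k) = 0"
          using sum_nonneg_eq_0_iff[OF assms(1), of "\<lambda>x. u x * (orient a b x * k)"] nn s0 by blast
        then have "u x * (orient a b x * k) = 0" using that by blast
        moreover have c: "orient a b x * k > 0" using pos that by blast
        ultimately show ?thesis by (simp only: mult_eq_0_iff) auto
      qed
      have split: "sum f B = f a + f b" if "\<forall>x\<in>B-{a,b}. f x = 0" for f :: "point \<Rightarrow> 'b::comm_monoid_add"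
      proof -
        have "sum f B = sum f {a,b}"
          by (rule sum.mono_neutral_right) (use assms(1,2,3) that in auto)
        then show ?thesis using assms(4) by simp
      qed
      have "y = u a *\<^sub>R a + u b *\<^sub>R b" using split[of "\<lambda>x. u x *\<^sub>R x"] z u(3) by simp
      moreover have "u a + u b = 1" using split[of u] z u(2) by simp
      ultimately have "y = (1 - u b) *\<^sub>R a + u b *\<^sub>R b"
        by (metis add_diff_cancel_right')
      moreover have "0 \<le> u b" "0 \<le> u a" using u(1) assms(2,3) by auto
      moreover have "u b \<le> 1" using \<open>0 \<le> u a\<close> \<open>u a + u b = 1\<close> by linarith
      ultimately show "y \<in> closed_segment a b" unfolding closed_segment_def by auto
    qed
  qed
  show ?thesis using face seteq by simp
qed


lemma orient_refl3: "orient p q (2 *\<^sub>R p - z) = - orient p q z"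
  by (simp add: orient_def algebra_simps)

lemma fwd:
  assumes R: "R = {r1,r2,r3}" "r1 \<noteq> r2" "r1 \<noteq> r3" "r2 \<noteq> r3"
    and disj: "R \<inter> B = {}" and finB: "finite B"
    and gp: "\<And>x y z. x \<in> R \<union> B \<Longrightarrow> y \<in> R \<union> B \<Longrightarrow> z \<in> R \<union> B \<Longrightarrow> x \<noteq> y \<Longrightarrow> x \<noteq> z \<Longrightarrow> y \<noteq> z \<Longrightarrow> orient x y z \<noteq> 0"
    and BR: "B \<subseteq> convex hull R"
    and uv: "u \<in> B" "v \<in> B" "u \<noteq> v"
    and cp: "convex_position {r1,r2,u,v}"
    and emp: "(R \<union> B) \<inter> interior (convex hull {r1,r2,u,v}) = {}"
  shows "\<exists>a b. hull_edge B a b \<and> (\<exists>H\<in>open_halfplanes a b. card (R \<inter> H) = 2 \<and> B \<inter> H = {})"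
proof -
  have rB: "r1 \<notin> B" "r2 \<notin> B" "r3 \<notin> B" using disj R by auto
  have uR: "u \<noteq> r1" "u \<noteq> r2" "u \<noteq> r3" "v \<noteq> r1" "v \<noteq> r2" "v \<noteq> r3" using rB uv by auto
  have hull3: "x \<in> convex hull {r1,r2,r3}" if "x \<in> B" for x using BR R that by auto
  define D where "D = orient r1 r2 r3"
  have D: "D \<noteq> 0" unfolding D_def using gp[of r1 r2 r3] R by auto
  have in12: "orient r1 r2 x * D > 0" if "x \<in> B" for x
  proof -
    have "orient r1 r2 x \<noteq> 0" using gp[of r1 r2 x] R that rB by auto
    then show ?thesis unfolding D_def by (rule inside[OF hull3[OF that]])
  qed
  have gpB: "orient r x y \<noteq> 0" if "r \<in> R" "x \<in> B" "y \<in> B" "x \<noteq> y" for r x y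
    using gp[of r x y] that disj by auto
  have r12: "r1 \<in> R" "r2 \<in> R" using R by auto
  have Bne: "B \<noteq> {}" using uv by auto
  have "\<exists>m\<in>B. \<forall>y\<in>B. y \<noteq> m \<longrightarrow> orient r1 m y * D > 0"
    by (rule extreme[OF finB Bne, of r1 r2]) (use in12 gpB[OF r12(1)] in blast)+
  then obtain s1 where s1: "s1 \<in> B" "\<forall>y\<in>B. y \<noteq> s1 \<longrightarrow> orient r1 s1 y * D > 0"
    by blast
  have in21: "orient r2 r1 x * (-D) > 0" if "x \<in> B" for x
    using in12[OF that] orient_swap[of r2 r1 x] by simp
  have "\<exists>m\<in>B. \<forall>y\<in>B. y \<noteq> m \<longrightarrow> orient r2 m y * (-D) > 0"
    by (rule extreme[OF finB Bne, of r2 r1]) (use in21 gpB[OF r12(2)] in blast)+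
  then obtain s2 where s2: "s2 \<in> B" "\<forall>y\<in>B. y \<noteq> s2 \<longrightarrow> orient r2 s2 y * (-D) > 0"
    by blast
  have cpu: "u \<notin> convex hull {r1,r2,v}"
  proof -
    have "{r1,r2,u,v} - {u} = {r1,r2,v}" using uR uv by auto
    then show ?thesis using cp unfolding convex_position_def by force
  qed
  have cpv: "v \<notin> convex hull {r1,r2,u}"
  proof -
    have "{r1,r2,u,v} - {v} = {r1,r2,u}" using uR uv by auto
    then show ?thesis using cp unfolding convex_position_def by force
  qed
  have tri: "x \<in> convex hull {r1,r2,y}"
    if "x \<in> B" "y \<in> B" "orient r1 x y * D > 0" "orient r2 x y * D < 0" for x y
  proof (rule in_tri[where k = D])
    show "orient r1 r2 x * D \<ge> 0" using in12[OF that(1)] by simp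
    show "orient r2 y x * D \<ge> 0" using that(4) orient_swap23[of r2 y x] by simp
    show "orient y r1 x * D \<ge> 0" using that(3) orient_cyc[of y r1 x] by simp
    show "orient r1 r2 y * D > 0" using in12[OF that(2)] .
  qed
  have nc1: "\<not> (orient r1 u v * D > 0 \<and> orient r2 u v * D < 0)" using tri[OF uv(1,2)] cpu by blast
  have nc2: "\<not> (orient r1 v u * D > 0 \<and> orient r2 v u * D < 0)" using tri[OF uv(2,1)] cpv by blast
  have intlem: "t \<in> interior (convex hull {r1,r2,x,y})"
    if xy: "x \<in> B" "y \<in> B" "t \<in> B" "orient r1 x y * D > 0" "orient r2 y x * D < 0"
      "orient r1 t x * D > 0" "orient r2 t y * D < 0" for x y t
  proof -
    define U where "U = {p. orient r1 r2 p * D > 0} \<inter> {p. orient x r1 p * D > 0} \<inter> {p. orient y r2 p * (-D) > 0}"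
    have oU: "open U" unfolding U_def by (intro open_Int open_hp)
    have tU: "t \<in> U" unfolding U_def using in12[OF xy(3)] xy(6,7) orient_cyc[of x r1 t] orient_cyc[of y r2 t] by simp
    have "U \<subseteq> convex hull {r1,r2,x}"
    proof
      fix p assume p: "p \<in> U"
      have p1: "orient r1 r2 p * D > 0" "orient x r1 p * D > 0" "orient y r2 p * (-D) > 0" using p unfolding U_def by auto
      have a: "orient r2 r1 p * (-D) > 0" using p1(1) orient_swap[of r2 r1 p] by simp
      have b: "orient r2 p y * (-D) > 0" using p1(3) orient_cyc[of y r2 p] by simp
      have c: "orient r2 y x * (-D) > 0" using xy(5) by simp
      have d: "orient r2 p x * (-D) > 0" by (rule otrans[OF a in21[OF xy(2)] in21[OF xy(1)] b c])
      show "p \<in> convex hull {r1,r2,x}"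
      proof (rule in_tri[where k = D])
        show "orient r1 r2 p * D \<ge> 0" using p1(1) by simp
        show "orient r2 x p * D \<ge> 0" using d orient_swap23[of r2 x p] by simp
        show "orient x r1 p * D \<ge> 0" using p1(2) by simp
        show "orient r1 r2 x * D > 0" using in12[OF xy(1)] .
      qed
    qed
    also have "\<dots> \<subseteq> convex hull {r1,r2,x,y}" by (rule hull_mono) auto
    finally have "U \<subseteq> interior (convex hull {r1,r2,x,y})" by (rule interior_maximal[OF _ oU])
    then show ?thesis using tU by auto
  qed
  have s12: "s1 \<noteq> s2"
  proof
    assume eq: "s1 = s2"
    define t where "t = s1"
    have H1: "\<forall>y\<in>B. y \<noteq> t \<longrightarrow> orient r1 t y * D > 0" using s1 t_def by simp
    have H2: "\<forall>y\<in>B. y \<noteq> t \<longrightarrow> orient r2 t y * D < 0" using s2 eq t_def by simp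
    have tB: "t \<in> B" using s1 t_def by simp
    show False
    proof (cases "t = u")
      case True then show ?thesis using H1 H2 uv nc1 by auto
    next
      case tu: False
      show ?thesis
      proof (cases "t = v")
        case True then show ?thesis using H1 H2 uv nc2 by auto
      next
        case tv: False
        have t1: "orient r1 t u * D > 0" "orient r1 t v * D > 0" "orient r2 t u * D < 0" "orient r2 t v * D < 0"
          using H1 H2 uv tu tv by auto
        have nz: "orient r1 u v * D \<noteq> 0" "orient r2 u v * D \<noteq> 0" using gpB[of r1 u v] gpB[of r2 u v] uv R D by auto
        show ?thesis
        proof (cases "orient r1 u v * D > 0")
          case True
          then have "\<not> orient r2 u v * D < 0" using nc1 by blast
          then have "orient r2 u v * D > 0" using nz(2) by linarith
          then have "orient r2 v u * D < 0" using orient_swap23[of r2 v u] by simp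
          then have "t \<in> interior (convex hull {r1,r2,u,v})"
            by (intro intlem[OF uv(1,2) tB True _ t1(1) t1(4)])
          then show ?thesis using emp tB by auto
        next
          case False
          have sw: "orient r1 v u * D = - (orient r1 u v * D)" using orient_swap23[of r1 v u] by simp
          have a: "orient r1 v u * D > 0" using False nz(1) unfolding sw by linarith
          then have "\<not> orient r2 v u * D < 0" using nc2 by blast
          moreover have "orient r2 v u * D = - (orient r2 u v * D)" using orient_swap23[of r2 v u] by simp
          then have "orient r2 v u * D \<noteq> 0" using nz(2) by linarith
          ultimately have "orient r2 v u * D > 0" by linarith
          then have b: "orient r2 u v * D < 0" using orient_swap23[of r2 u v] by simp
          have "t \<in> interior (convex hull {r1,r2,v,u})"
            by (rule intlem[OF uv(2,1) tB a b t1(2) t1(3)])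
          moreover have "{r1,r2,v,u} = {r1,r2,u,v}" by auto
          ultimately show ?thesis using emp tB by auto
        qed
      qed
    qed
  qed
  define G where "G = B - {s1}"
  have finG: "finite G" using finB G_def by simp
  have Gne: "G \<noteq> {}" using uv G_def by auto
  have hpG: "\<forall>z\<in>G. orient s1 r1 z * (-D) > 0"
  proof
    fix z assume "z \<in> G"
    then have "orient r1 s1 z * D > 0" using s1 G_def by auto
    moreover have "orient s1 r1 z = - orient r1 s1 z" using orient_cyc[of s1 r1 z] orient_swap23[of r1 z s1] by simp
    ultimately show "orient s1 r1 z * (-D) > 0" by simp
  qed
  have ncG: "\<forall>x\<in>G. \<forall>y\<in>G. x \<noteq> y \<longrightarrow> orient s1 x y \<noteq> 0"
  proof (intro ballI impI)
    fix x y assume xy: "x \<in> G" "y \<in> G" "x \<noteq> y"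
    then have "x \<in> B" "y \<in> B" "x \<noteq> s1" "y \<noteq> s1" unfolding G_def by auto
    then show "orient s1 x y \<noteq> 0" using gp[of s1 x y] s1(1) xy(3) by auto
  qed
  obtain b where b: "b \<in> G" "\<forall>z\<in>G. z \<noteq> b \<longrightarrow> orient s1 b z * (-D) > 0"
    using extreme[OF finG Gne hpG ncG] by blast
  have bB: "b \<in> B" "b \<noteq> s1" using b G_def by auto
  have i1: "orient s1 b r1 * (-D) < 0"
    using hpG b(1) orient_swap23[of s1 b r1] by force
  have i2: "orient s1 b r2 * (-D) < 0"
  proof (rule ccontr)
    assume "\<not> ?thesis"
    moreover have "orient s1 b r2 \<noteq> 0" using gp[of s1 b r2] bB s1 R rB by auto
    ultimately have pos: "orient s1 b r2 * (-D) > 0" using D by (simp add: not_less order.order_iff_strict)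
    define r2' where "r2' = 2 *\<^sub>R s1 - r2"
    have a: "orient s1 r1 r2' * (-D) > 0"
    proof -
      have "orient s1 r1 r2' = - orient s1 r1 r2" unfolding r2'_def by (rule orient_refl3)
      moreover have "orient s1 r1 r2 = orient r1 r2 s1" using orient_cyc[of s1 r1 r2] by simp
      ultimately show ?thesis using in12[OF s1(1)] by simp
    qed
    have c: "orient s1 r2' b * (-D) > 0"
    proof -
      have "orient s1 r2' b = - orient s1 r2 b" unfolding r2'_def by (rule orient_refl)
      then show ?thesis using pos orient_swap23[of s1 r2 b] by simp
    qed
    have all: "orient r2 s1 z * (-D) > 0" if "z \<in> G" for z
    proof (cases "z = b")
      case True then show ?thesis using pos orient_cyc[of r2 s1 b] by simp
    next
      case False
      have "orient s1 b z * (-D) > 0" using b that False by auto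
      then have "orient s1 r2' z * (-D) > 0"
        by (intro otrans[OF a hpG[rule_format, OF b(1)] hpG[rule_format, OF that] c])
      moreover have "orient s1 r2' z = - orient s1 r2 z" unfolding r2'_def by (rule orient_refl)
      moreover have "orient r2 s1 z = orient s1 z r2" by (rule orient_cyc)
      moreover have "orient s1 z r2 = - orient s1 r2 z" by (rule orient_swap23)
      ultimately show ?thesis by simp
    qed
    have "s2 \<in> G" using s2 s12 G_def by auto
    then have "orient r2 s1 s2 * (-D) > 0" by (rule all)
    moreover have "orient r2 s2 s1 * (-D) > 0" using s2 s1(1) s12 by auto
    moreover have "orient r2 s2 s1 = - orient r2 s1 s2" by (rule orient_swap23)
    ultimately show False by simp
  qed
  have i3: "orient s1 b r3 * (-D) \<ge> 0"
  proof (rule ccontr)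
    assume "\<not> ?thesis"
    then have "orient s1 b r3 * D > 0" by simp
    moreover have "orient s1 b r1 * D > 0" "orient s1 b r2 * D > 0" using i1 i2 by simp_all
    ultimately have "orient s1 b s1 * D > 0"
      by (intro hull3_pos[where f = "\<lambda>q. orient s1 b q * D", OF hull3[OF s1(1)]]) auto
    then show False by simp
  qed
  define H where "H = {p. orient s1 b p * (-D) < 0}"
  have Hin: "H \<in> open_halfplanes s1 b"
  proof (cases "D > 0")
    case True
    then have "H = {p. orient s1 b p > 0}" unfolding H_def
      by (intro Collect_cong) (use True in \<open>simp add: zero_less_mult_iff\<close>)
    then show ?thesis unfolding open_halfplanes_def by simp
  next
    case False
    then have "D < 0" using D by simp
    then have "H = {p. orient s1 b p < 0}" unfolding H_def
      by (intro Collect_cong) (use \<open>D < 0\<close> in \<open>simp add: zero_less_mult_iff\<close>)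
    then show ?thesis unfolding open_halfplanes_def by simp
  qed
  have RH: "R \<inter> H = {r1,r2}" unfolding H_def using R i1 i2 i3 by auto
  have cRH: "card (R \<inter> H) = 2" unfolding RH using R by simp
  have BH: "B \<inter> H = {}"
  proof (rule ccontr)
    assume "B \<inter> H \<noteq> {}"
    then obtain z where z: "z \<in> B" "orient s1 b z * (-D) < 0" unfolding H_def by auto
    then have "z \<noteq> s1" "z \<noteq> b" by auto
    then have "z \<in> G" "z \<noteq> b" using z G_def by auto
    then show False using b z by force
  qed
  have edge: "hull_edge B s1 b"
    unfolding hull_edge_def
  proof (intro conjI)
    show "closed_segment s1 b face_of convex hull B"
    proof (rule face_lemma[OF finB s1(1) bB(1) bB(2)[symmetric], of "-D"])
      show "-D \<noteq> 0" using D by simp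
      show "\<forall>z\<in>B - {s1, b}. 0 < orient s1 b z * - D" using b G_def by auto
    qed
  qed (use s1 bB in auto)
  show ?thesis using edge Hin cRH BH by blast
qed



theorem lemma6:
  fixes R B :: "point set"
  assumes "finite R" and "finite B" and "R \<inter> B = {}"
    and "general_position (R \<union> B)"
    and "\<not> linearly_separable R B"
    and "convex hull B \<subseteq> convex hull R"
    and "card R = 3" and "card B \<ge> 2"
  shows "(\<exists>Q. balanced_convex_4hole R B Q) \<longleftrightarrow>
         (\<exists>u v. hull_edge B u v \<and>
            (\<exists>H\<in>open_halfplanes u v. card (R \<inter> H) = 2 \<and> B \<inter> H = {}))"
proof -
  have gp: "\<And>x y z. x \<in> R \<union> B \<Longrightarrow> y \<in> R \<union> B \<Longrightarrow> z \<in> R \<union> B \<Longrightarrow> x \<noteq> y \<Longrightarrow> x \<noteq> z \<Longrightarrow> y \<noteq> z \<Longrightarrow> orient x y z \<noteq> 0"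
    using assms(4) orient0_collinear unfolding general_position_def by blast
  have BR: "B \<subseteq> convex hull R" by (rule subset_trans[OF hull_subset assms(6)])
  have third: "\<exists>c. R = {a,b,c} \<and> a \<noteq> c \<and> b \<noteq> c" if "{a,b} \<subseteq> R" "a \<noteq> b" for a b
  proof -
    have "card (R - {a,b}) = card R - card {a,b}" by (rule card_Diff_subset) (use that in auto)
    then have "card (R - {a,b}) = 1" using assms(7) that by simp
    then obtain c where c: "R - {a,b} = {c}" by (rule card_1_singletonE)
    then have "R = {a,b,c}" using that by auto
    moreover have "a \<noteq> c" "b \<noteq> c" using c by auto
    ultimately show ?thesis by blast
  qed
  show ?thesis
  proof
    assume "\<exists>Q. balanced_convex_4hole R B Q"
    then obtain Q where Q0: "balanced_convex_4hole R B Q" by blast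
    have Qa: "Q \<subseteq> R \<union> B \<and> card Q = 4 \<and> convex_position Q \<and>
      (R \<union> B) \<inter> interior (convex hull Q) = {} \<and> card (Q \<inter> R) = 2 \<and> card (Q \<inter> B) = 2"
      using Q0 unfolding balanced_convex_4hole_def convex_4hole_def by simp
    then have Q: "Q \<subseteq> R \<union> B" "convex_position Q"
      "(R \<union> B) \<inter> interior (convex hull Q) = {}" "card (Q \<inter> R) = 2" "card (Q \<inter> B) = 2"
      by simp_all
    from Q(4) obtain q1 q2 where QR: "Q \<inter> R = {q1,q2}" "q1 \<noteq> q2" unfolding card_2_iff by blast
    from Q(5) obtain u v where QB: "Q \<inter> B = {u,v}" "u \<noteq> v" unfolding card_2_iff by blast
    have "Q = (Q \<inter> R) \<union> (Q \<inter> B)" using Q(1) by blast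
    then have Qeq: "Q = {q1,q2,u,v}" unfolding QR QB by blast
    have sub: "{q1,q2} \<subseteq> R" using QR(1) by blast
    obtain q3 where R3: "R = {q1,q2,q3}" "q1 \<noteq> q3" "q2 \<noteq> q3" using third[OF sub QR(2)] by blast
    have uv: "u \<in> B" "v \<in> B" using QB(1) by blast+
    show "\<exists>u v. hull_edge B u v \<and> (\<exists>H\<in>open_halfplanes u v. card (R \<inter> H) = 2 \<and> B \<inter> H = {})"
      by (rule fwd[OF R3(1) QR(2) R3(2) R3(3) assms(3) assms(2) gp BR uv QB(2)])
         (use Q(2,3) Qeq in simp_all)
  next
    assume "\<exists>u v. hull_edge B u v \<and> (\<exists>H\<in>open_halfplanes u v. card (R \<inter> H) = 2 \<and> B \<inter> H = {})"
    then obtain u v H where uvH: "hull_edge B u v" "H \<in> open_halfplanes u v" "card (R \<inter> H) = 2" "B \<inter> H = {}"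
      by blast
    have uv: "u \<in> B" "v \<in> B" "u \<noteq> v" using uvH(1) unfolding hull_edge_def by auto
    obtain k :: real where k: "k \<noteq> 0" "H = {p. orient u v p * k > 0}"
    proof (cases "H = {p. orient u v p > 0}")
      case True then show ?thesis by (intro that[of 1]) simp_all
    next
      case False
      then have "H = {p. orient u v p < 0}" using uvH(2) unfolding open_halfplanes_def by auto
      then show ?thesis by (intro that[of "-1"]) simp_all
    qed
    from uvH(3) obtain r1 r2 where RH: "R \<inter> H = {r1,r2}" "r1 \<noteq> r2" unfolding card_2_iff by blast
    have sub: "{r1,r2} \<subseteq> R" using RH(1) by blast
    obtain r3 where R3: "R = {r1,r2,r3}" "r1 \<noteq> r3" "r2 \<noteq> r3" using third[OF sub RH(2)] by blast
    have "r1 \<in> H" "r2 \<in> H" using RH(1) by blast+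
    then have h1: "orient u v r1 * k > 0" "orient u v r2 * k > 0" using k(2) by simp_all
    have hB: "\<forall>b\<in>B. orient u v b * k \<le> 0"
    proof
      fix b assume "b \<in> B"
      then have "b \<notin> H" using uvH(4) by blast
      then show "orient u v b * k \<le> 0" using k(2) by simp
    qed
    have "balanced_convex_4hole R B {r1,r2,u,v}"
      by (rule dir_back[OF R3(1) RH(2) R3(2) R3(3) assms(3) gp BR uv k(1) h1 hB])
    then show "\<exists>Q. balanced_convex_4hole R B Q" by blast
  qed
qed

end
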